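(* Let $T$ be a forest with no isolated vertices and no open twins. Then $T$ is an iso-unique Grundy total domination graph if and only if $\gamma_{gr}^{t}(T)=n(T)$, where $n(T)$ is the number of vertices of $T$.
   Context: For a graph $G$, $N(v)$ denotes the open neighborhood of $v$. A sequence $(v_1,\ldots,v_k)$ of distinct vertices is an open neighborhood sequence if $N(v_i)\setminus\bigcup_{j=1}^{i-1}N(v_j)\neq\emptyset$ for each $i\in[k]$. The Grundy total domination number $\gamma_{gr}^{t}(G)$ is the maximum length of an open neighborhood sequence; the vertex set of such a maximum-length sequence is a Grundy total dominating set. $G$ is an iso-unique Grundy total domination graph if for every two Grundy total dominating sets $A,B$ there is an automorphism $\phi$ of $G$ with $\phi(A)=B$. Two distinct vertices $u,v$ are open twins if $N(u)=N(v)$; a vertex is an open twin if it has an open twin partner. *)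

theory Defs
  imports Main
begin

definition simple_graph :: "'a set \<Rightarrow> ('a \<Rightarrow> 'a \<Rightarrow> bool) \<Rightarrow> bool" where
  "simple_graph V E \<longleftrightarrow> finite V \<and> (\<forall>u v. E u v \<longrightarrow> E v u) \<and> (\<forall>v. \<not> E v v)
     \<and> (\<forall>u v. E u v \<longrightarrow> u \<in> V \<and> v \<in> V)"

definition nbhd :: "'a set \<Rightarrow> ('a \<Rightarrow> 'a \<Rightarrow> bool) \<Rightarrow> 'a \<Rightarrow> 'a set" where
  "nbhd V E v = {u \<in> V. E v u}"

definition is_cycle :: "'a set \<Rightarrow> ('a \<Rightarrow> 'a \<Rightarrow> bool) \<Rightarrow> 'a list \<Rightarrow> bool" where
  "is_cycle V E cs \<longleftrightarrow> length cs \<ge> 3 \<and> distinct cs \<and> set cs \<subseteq> V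
     \<and> (\<forall>i. Suc i < length cs \<longrightarrow> E (cs ! i) (cs ! Suc i))
     \<and> E (last cs) (hd cs)"

definition forest :: "'a set \<Rightarrow> ('a \<Rightarrow> 'a \<Rightarrow> bool) \<Rightarrow> bool" where
  "forest V E \<longleftrightarrow> simple_graph V E \<and> \<not> (\<exists>cs. is_cycle V E cs)"

definition no_isolated :: "'a set \<Rightarrow> ('a \<Rightarrow> 'a \<Rightarrow> bool) \<Rightarrow> bool" where
  "no_isolated V E \<longleftrightarrow> (\<forall>v\<in>V. nbhd V E v \<noteq> {})"

definition open_twins :: "'a set \<Rightarrow> ('a \<Rightarrow> 'a \<Rightarrow> bool) \<Rightarrow> 'a \<Rightarrow> 'a \<Rightarrow> bool" where
  "open_twins V E u v \<longleftrightarrow> u \<in> V \<and> v \<in> V \<and> u \<noteq> v \<and> nbhd V E u = nbhd V E v"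

definition no_open_twins :: "'a set \<Rightarrow> ('a \<Rightarrow> 'a \<Rightarrow> bool) \<Rightarrow> bool" where
  "no_open_twins V E \<longleftrightarrow> (\<nexists>u v. open_twins V E u v)"

definition open_nbhd_seq :: "'a set \<Rightarrow> ('a \<Rightarrow> 'a \<Rightarrow> bool) \<Rightarrow> 'a list \<Rightarrow> bool" where
  "open_nbhd_seq V E vs \<longleftrightarrow> distinct vs \<and> set vs \<subseteq> V
     \<and> (\<forall>i < length vs. nbhd V E (vs ! i) - (\<Union>j<i. nbhd V E (vs ! j)) \<noteq> {})"

definition grundy_total_dom_num :: "'a set \<Rightarrow> ('a \<Rightarrow> 'a \<Rightarrow> bool) \<Rightarrow> nat" where
  "grundy_total_dom_num V E = Max (length ` {vs. open_nbhd_seq V E vs})"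

definition grundy_total_dom_set :: "'a set \<Rightarrow> ('a \<Rightarrow> 'a \<Rightarrow> bool) \<Rightarrow> 'a set \<Rightarrow> bool" where
  "grundy_total_dom_set V E S \<longleftrightarrow>
     (\<exists>vs. open_nbhd_seq V E vs \<and> length vs = grundy_total_dom_num V E \<and> set vs = S)"

definition automorphism :: "'a set \<Rightarrow> ('a \<Rightarrow> 'a \<Rightarrow> bool) \<Rightarrow> ('a \<Rightarrow> 'a) \<Rightarrow> bool" where
  "automorphism V E \<phi> \<longleftrightarrow> bij_betw \<phi> V V \<and> (\<forall>u\<in>V. \<forall>v\<in>V. E (\<phi> u) (\<phi> v) \<longleftrightarrow> E u v)"

definition iso_unique_grundy_total :: "'a set \<Rightarrow> ('a \<Rightarrow> 'a \<Rightarrow> bool) \<Rightarrow> bool" where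
  "iso_unique_grundy_total V E \<longleftrightarrow>
     (\<forall>A B. grundy_total_dom_set V E A \<and> grundy_total_dom_set V E B
        \<longrightarrow> (\<exists>\<phi>. automorphism V E \<phi> \<and> \<phi> ` A = B))"

end

theory Submission
  imports Defs
begin

definition CovU :: "'a set \<Rightarrow> ('a \<Rightarrow> 'a \<Rightarrow> bool) \<Rightarrow> 'a list \<Rightarrow> 'a set" where
  "CovU V E xs = \<Union> (nbhd V E ` set xs)"

lemma CovU_simps[simp]: "CovU V E [] = {}" "CovU V E (xs @ ys) = CovU V E xs \<union> CovU V E ys"
  "CovU V E (x # xs) = nbhd V E x \<union> CovU V E xs"
  by (auto simp: CovU_def)

lemma Union_nth_prefix: "(\<Union>j<length xs. f (xs ! j)) = \<Union> (f ` set xs)"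
  by (auto simp: set_conv_nth)

lemma ons_Nil[simp]: "open_nbhd_seq V E []"
  by (simp add: open_nbhd_seq_def)

lemma ons_snoc: "open_nbhd_seq V E (xs @ [x]) \<longleftrightarrow>
   open_nbhd_seq V E xs \<and> x \<notin> set xs \<and> x \<in> V \<and> nbhd V E x - CovU V E xs \<noteq> {}"
proof
  assume a: "open_nbhd_seq V E (xs @ [x])"
  have 1: "open_nbhd_seq V E xs"
    unfolding open_nbhd_seq_def
  proof (intro conjI allI impI)
    show "distinct xs" "set xs \<subseteq> V" using a by (auto simp: open_nbhd_seq_def)
    fix i assume i: "i < length xs"
    have "nbhd V E ((xs@[x]) ! i) - (\<Union>j<i. nbhd V E ((xs@[x]) ! j)) \<noteq> {}"
      using a i by (auto simp: open_nbhd_seq_def)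
    moreover have "(\<Union>j<i. nbhd V E ((xs@[x]) ! j)) = (\<Union>j<i. nbhd V E (xs ! j))"
      using i by (auto simp: nth_append)
    ultimately show "nbhd V E (xs ! i) - (\<Union>j<i. nbhd V E (xs ! j)) \<noteq> {}"
      using i by (simp add: nth_append)
  qed
  have aa: "\<forall>i<length (xs@[x]). nbhd V E ((xs@[x]) ! i) - (\<Union>j<i. nbhd V E ((xs@[x]) ! j)) \<noteq> {}"
    using a unfolding open_nbhd_seq_def by (elim conjE)
  have "nbhd V E ((xs@[x]) ! length xs) - (\<Union>j<length xs. nbhd V E ((xs@[x]) ! j)) \<noteq> {}"
    using aa[rule_format, of "length xs"] by simp
  moreover have "(\<Union>j<length xs. nbhd V E ((xs@[x]) ! j)) = (\<Union>j<length xs. nbhd V E (xs ! j))"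
    by (auto simp: nth_append)
  ultimately have "nbhd V E x - CovU V E xs \<noteq> {}"
    by (simp add: CovU_def Union_nth_prefix)
  with 1 a show "open_nbhd_seq V E xs \<and> x \<notin> set xs \<and> x \<in> V \<and> nbhd V E x - CovU V E xs \<noteq> {}"
    by (auto simp: open_nbhd_seq_def)
next
  assume a: "open_nbhd_seq V E xs \<and> x \<notin> set xs \<and> x \<in> V \<and> nbhd V E x - CovU V E xs \<noteq> {}"
  show "open_nbhd_seq V E (xs @ [x])"
    unfolding open_nbhd_seq_def
  proof (intro conjI allI impI)
    show "distinct (xs @ [x])" "set (xs @ [x]) \<subseteq> V" using a by (auto simp: open_nbhd_seq_def)
    fix i assume i: "i < length (xs @ [x])"
    show "nbhd V E ((xs @ [x]) ! i) - (\<Union>j<i. nbhd V E ((xs @ [x]) ! j)) \<noteq> {}"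
    proof (cases "i < length xs")
      case True
      have "(\<Union>j<i. nbhd V E ((xs@[x]) ! j)) = (\<Union>j<i. nbhd V E (xs ! j))"
        using True by (auto simp: nth_append)
      then show ?thesis using a True by (auto simp: open_nbhd_seq_def nth_append)
    next
      case False
      then have ii: "i = length xs" using i by simp
      have "(\<Union>j<length xs. nbhd V E ((xs@[x]) ! j)) = (\<Union>j<length xs. nbhd V E (xs ! j))"
        by (auto simp: nth_append)
      then show ?thesis using a ii
        by (simp add: CovU_def Union_nth_prefix)
    qed
  qed
qed

lemma ons_prefix: "open_nbhd_seq V E (xs @ ys) \<Longrightarrow> open_nbhd_seq V E xs"
proof (induction ys rule: rev_induct)
  case Nil then show ?case by simp
next
  case (snoc y ys) then show ?case using ons_snoc[of V E "xs @ ys" y] by simp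
qed

lemma ons_split: "open_nbhd_seq V E (xs @ x # r) \<Longrightarrow> nbhd V E x - CovU V E xs \<noteq> {}"
  using ons_prefix[of V E "xs @ [x]" r] ons_snoc[of V E xs x] by simp

lemma ons_distinct: "open_nbhd_seq V E xs \<Longrightarrow> distinct xs"
  and ons_set: "open_nbhd_seq V E xs \<Longrightarrow> set xs \<subseteq> V"
  by (auto simp: open_nbhd_seq_def)

lemma ons_len: "finite V \<Longrightarrow> open_nbhd_seq V E xs \<Longrightarrow> length xs \<le> card V"
  by (metis card_mono distinct_card ons_distinct ons_set)

lemma lengths_finite: "finite V \<Longrightarrow> finite (length ` {vs. open_nbhd_seq V E vs})"
  by (rule finite_subset[of _ "{..card V}"]) (auto dest: ons_len)

lemma gamma_ge: "finite V \<Longrightarrow> open_nbhd_seq V E xs \<Longrightarrow> length xs \<le> grundy_total_dom_num V E"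
  unfolding grundy_total_dom_num_def by (rule Max_ge) (auto simp: lengths_finite)

lemma gamma_ex: "finite V \<Longrightarrow> \<exists>xs. open_nbhd_seq V E xs \<and> length xs = grundy_total_dom_num V E"
proof -
  assume f: "finite V"
  have "grundy_total_dom_num V E \<in> length ` {vs. open_nbhd_seq V E vs}"
    unfolding grundy_total_dom_num_def
    by (rule Max_in) (auto simp: lengths_finite f intro: exI[of _ "[]"])
  then show ?thesis by auto
qed

lemma gamma_le: "finite V \<Longrightarrow> grundy_total_dom_num V E \<le> card V"
  using gamma_ex ons_len by metis


definition is_leaf :: "'a set \<Rightarrow> ('a \<Rightarrow> 'a \<Rightarrow> bool) \<Rightarrow> 'a \<Rightarrow> bool" where
  "is_leaf V E v \<longleftrightarrow> v \<in> V \<and> (\<exists>s. nbhd V E v = {s})"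

lemma ons_swap:
  assumes "open_nbhd_seq V E (ys @ c # zs)" "l \<notin> set (ys @ c # zs)" "l \<in> V"
    "nbhd V E l \<subseteq> nbhd V E c" "nbhd V E l - CovU V E ys \<noteq> {}"
  shows "open_nbhd_seq V E (ys @ l # zs)"
  using assms(1,2)
proof (induction zs rule: rev_induct)
  case Nil
  then have "open_nbhd_seq V E ys" using ons_prefix[of V E ys "[c]"] by simp
  then show ?case using Nil assms(3,5) ons_snoc[of V E ys l] by simp
next
  case (snoc z zs)
  have o: "open_nbhd_seq V E ((ys @ c # zs) @ [z])" using snoc.prems(1) by simp
  then have o1: "open_nbhd_seq V E (ys @ c # zs)" and z: "z \<notin> set (ys @ c # zs)" "z \<in> V"
    and n: "nbhd V E z - CovU V E (ys @ c # zs) \<noteq> {}"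
    using ons_snoc[of V E "ys @ c # zs" z] by auto
  have ih: "open_nbhd_seq V E (ys @ l # zs)" using snoc.IH[OF o1] snoc.prems(2) by simp
  have "CovU V E (ys @ l # zs) \<subseteq> CovU V E (ys @ c # zs)" using assms(4) by auto
  then have "nbhd V E z - CovU V E (ys @ l # zs) \<noteq> {}" using n by blast
  moreover have "z \<notin> set (ys @ l # zs)" using z snoc.prems(2) by auto
  ultimately show ?case using ih z ons_snoc[of V E "ys @ l # zs" z] by simp
qed

lemma leaf_nbhd: "is_leaf V E l \<Longrightarrow> \<exists>s. nbhd V E l = {s}"
  by (simp add: is_leaf_def)

lemma all_leaves_step:
  assumes sg: "simple_graph V E" and nt: "no_open_twins V E"
    and o: "open_nbhd_seq V E xs" and len: "length xs = grundy_total_dom_num V E"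
    and l: "is_leaf V E l" "l \<notin> set xs"
  shows "\<exists>ys. open_nbhd_seq V E ys \<and> length ys = grundy_total_dom_num V E \<and>
     {v. is_leaf V E v} - set ys \<subset> {v. is_leaf V E v} - set xs"
proof -
  have fin: "finite V" using sg by (simp add: simple_graph_def)
  obtain s where s: "nbhd V E l = {s}" using l(1) by (auto simp: is_leaf_def)
  have lV: "l \<in> V" using l(1) by (simp add: is_leaf_def)
  have "s \<in> CovU V E xs"
  proof (rule ccontr)
    assume "s \<notin> CovU V E xs"
    then have "open_nbhd_seq V E (xs @ [l])" using ons_snoc[of V E xs l] o l lV s by auto
    from gamma_ge[OF fin this] len show False by simp
  qed
  then have "\<exists>x\<in>set xs. s \<in> nbhd V E x" by (auto simp: CovU_def)
  then obtain as c bs where sp: "xs = as @ c # bs" "s \<in> nbhd V E c"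
    "\<forall>y\<in>set as. s \<notin> nbhd V E y"
    using split_list_first_prop[of xs "\<lambda>x. s \<in> nbhd V E x"] by blast
  have "s \<notin> CovU V E as" using sp(3) by (auto simp: CovU_def)
  then have o2: "open_nbhd_seq V E (as @ l # bs)"
    using ons_swap[of V E as c bs l] o sp l lV s by auto
  have len2: "length (as @ l # bs) = grundy_total_dom_num V E" using len sp by simp
  have cnl: "\<not> is_leaf V E c"
  proof
    assume "is_leaf V E c"
    then obtain t where t: "nbhd V E c = {t}" by (auto simp: is_leaf_def)
    then have "nbhd V E c = nbhd V E l" using s sp(2) by auto
    moreover have "c \<noteq> l" using l(2) sp by auto
    moreover have "c \<in> V" using ons_set[OF o] sp by auto
    ultimately have "open_twins V E c l" using lV by (simp add: open_twins_def)
    then show False using nt by (simp add: no_open_twins_def)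
  qed
  have "{v. is_leaf V E v} - set (as @ l # bs) \<subset> {v. is_leaf V E v} - set xs"
  proof -
    have e: "{v. is_leaf V E v} - set (as @ l # bs) = ({v. is_leaf V E v} - set xs) - {l}"
      using sp cnl by auto
    have "l \<in> {v. is_leaf V E v} - set xs" using l by simp
    then show ?thesis unfolding e by blast
  qed
  then show ?thesis using o2 len2 by blast
qed

lemma all_leaves:
  assumes sg: "simple_graph V E" and nt: "no_open_twins V E"
  shows "\<exists>ys. open_nbhd_seq V E ys \<and> length ys = grundy_total_dom_num V E \<and>
     {v. is_leaf V E v} \<subseteq> set ys"
proof -
  have fin: "finite V" using sg by (simp add: simple_graph_def)
  have finL: "finite {v. is_leaf V E v}"
    by (rule finite_subset[OF _ fin]) (auto simp: is_leaf_def)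
  have "\<And>xs. open_nbhd_seq V E xs \<Longrightarrow> length xs = grundy_total_dom_num V E \<Longrightarrow>
     card ({v. is_leaf V E v} - set xs) = m \<Longrightarrow> \<exists>ys. open_nbhd_seq V E ys \<and> length ys = grundy_total_dom_num V E \<and>
     {v. is_leaf V E v} \<subseteq> set ys" for m
  proof (induction m rule: less_induct)
    case (less m xs)
    show ?case
    proof (cases "{v. is_leaf V E v} \<subseteq> set xs")
      case True then show ?thesis using less.prems by blast
    next
      case False
      then obtain l where "is_leaf V E l" "l \<notin> set xs" by auto
      from all_leaves_step[OF sg nt less.prems(1,2) this] obtain ys where
        ys: "open_nbhd_seq V E ys" "length ys = grundy_total_dom_num V E"
         "{v. is_leaf V E v} - set ys \<subset> {v. is_leaf V E v} - set xs" by blast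
      have "card ({v. is_leaf V E v} - set ys) < m"
        using psubset_card_mono[OF _ ys(3)] finL less.prems(3) by auto
      from less.IH[OF this ys(1,2)] show ?thesis by simp
    qed
  qed
  with gamma_ex[OF fin] show ?thesis by blast
qed


lemma cycle_from_deg2:
  assumes sg: "simple_graph V E" and WV: "W \<subseteq> V" and w0: "w0 \<in> W"
    and deg: "\<forall>w\<in>W. \<forall>x. \<exists>y\<in>W. E w y \<and> y \<noteq> x"
  shows "\<exists>cs. is_cycle V E cs"
proof -
  have fin: "finite W" using sg WV finite_subset by (auto simp: simple_graph_def)
  have irr: "\<And>v. \<not> E v v" using sg by (simp add: simple_graph_def)
  obtain w1 where w1: "w1 \<in> W" "E w0 w1" using deg w0 by blast
  define nxt where "nxt p = (snd p, SOME y. y \<in> W \<and> E (snd p) y \<and> y \<noteq> fst p)" for p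
  define g where "g n = (nxt ^^ n) (w0, w1)" for n
  define f where "f n = fst (g n)" for n
  have gS: "g (Suc n) = nxt (g n)" for n by (simp add: g_def)
  have inv: "fst (g n) \<in> W \<and> snd (g n) \<in> W \<and> E (fst (g n)) (snd (g n))" for n
  proof (induction n)
    case 0 then show ?case using w0 w1 by (simp add: g_def)
  next
    case (Suc n)
    have "\<exists>y. y \<in> W \<and> E (snd (g n)) y \<and> y \<noteq> fst (g n)" using deg Suc by blast
    then have "(SOME y. y \<in> W \<and> E (snd (g n)) y \<and> y \<noteq> fst (g n)) \<in> W \<and>
       E (snd (g n)) (SOME y. y \<in> W \<and> E (snd (g n)) y \<and> y \<noteq> fst (g n)) \<and>
       (SOME y. y \<in> W \<and> E (snd (g n)) y \<and> y \<noteq> fst (g n)) \<noteq> fst (g n)"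
      by (rule someI_ex)
    then show ?case using Suc by (simp add: gS nxt_def)
  qed
  have fW: "f n \<in> W" for n using inv by (simp add: f_def)
  have fE: "E (f n) (f (Suc n))" for n using inv[of n] by (simp add: f_def gS nxt_def)
  have f2: "f (Suc (Suc n)) \<noteq> f n" for n
  proof -
    have "\<exists>y. y \<in> W \<and> E (snd (g n)) y \<and> y \<noteq> fst (g n)" using deg inv by blast
    then have "(SOME y. y \<in> W \<and> E (snd (g n)) y \<and> y \<noteq> fst (g n)) \<noteq> fst (g n)"
      by (rule someI2_ex) blast
    then show ?thesis by (simp add: f_def gS nxt_def)
  qed
  have "\<not> inj_on f {..card W}"
  proof
    assume "inj_on f {..card W}"
    then have "card (f ` {..card W}) = Suc (card W)" by (simp add: card_image)
    moreover have "card (f ` {..card W}) \<le> card W"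
      using fW fin by (intro card_mono) auto
    ultimately show False by simp
  qed
  then have ex: "\<exists>j. \<exists>i<j. f i = f j"
    unfolding inj_on_def by (metis linorder_neqE_nat)
  define j where "j = (LEAST j. \<exists>i<j. f i = f j)"
  have "\<exists>i<j. f i = f j" unfolding j_def using ex by (rule LeastI_ex)
  then obtain i where ij: "i < j" "f i = f j" by blast
  have minj: "\<And>a b. a < b \<Longrightarrow> b < j \<Longrightarrow> f a \<noteq> f b"
  proof
    fix a b assume "a < b" "b < j" "f a = f b"
    then have "\<exists>i<b. f i = f b" by blast
    then have "j \<le> b" unfolding j_def by (rule Least_le)
    with \<open>b < j\<close> show False by simp
  qed
  have j1: "j \<noteq> Suc i" using ij fE[of i] irr by auto
  have j2: "j \<noteq> Suc (Suc i)" using ij f2[of i] by auto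
  define cs where "cs = map f [i..<j]"
  have "is_cycle V E cs"
    unfolding is_cycle_def
  proof (intro conjI allI impI)
    show "3 \<le> length cs" using ij j1 j2 by (simp add: cs_def)
    show "distinct cs" unfolding cs_def distinct_map
      using minj by (auto simp: inj_on_def) (metis linorder_neqE_nat)
    show "set cs \<subseteq> V" using fW WV by (auto simp: cs_def)
    fix k assume "Suc k < length cs"
    then show "E (cs ! k) (cs ! Suc k)" using fE[of "i+k"] by (simp add: cs_def)
  next
    have "last cs = f (j - 1)" using ij by (simp add: cs_def last_map)
    moreover have "hd cs = f j" using ij by (simp add: cs_def hd_map hd_upt)
    moreover have "E (f (j - 1)) (f j)" using fE[of "j - 1"] ij by simp
    ultimately show "E (last cs) (hd cs)" by simp
  qed
  then show ?thesis by blast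
qed

lemma forest_low_deg:
  assumes fo: "forest V E" and WV: "W \<subseteq> V" and ne: "W \<noteq> {}"
  shows "\<exists>s\<in>W. \<forall>x\<in>W. \<forall>y\<in>W. E s x \<longrightarrow> E s y \<longrightarrow> x = y"
proof (rule ccontr)
  assume a: "\<not> ?thesis"
  have deg: "\<forall>w\<in>W. \<forall>x. \<exists>y\<in>W. E w y \<and> y \<noteq> x"
  proof (intro ballI allI)
    fix w x assume "w \<in> W"
    then obtain y z where "y \<in> W" "z \<in> W" "E w y" "E w z" "y \<noteq> z" using a by blast
    then show "\<exists>y\<in>W. E w y \<and> y \<noteq> x" by metis
  qed
  obtain w0 where "w0 \<in> W" using ne by blast
  from cycle_from_deg2[OF _ WV this deg] fo show False by (auto simp: forest_def)
qed


definition restr :: "'a set \<Rightarrow> ('a \<Rightarrow> 'a \<Rightarrow> bool) \<Rightarrow> 'a \<Rightarrow> 'a \<Rightarrow> bool" where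
  "restr W E u v \<longleftrightarrow> E u v \<and> u \<in> W \<and> v \<in> W"

lemma nbhd_restr: "nbhd W (restr W E) u = (if u \<in> W then nbhd V E u \<inter> W else {})"
  if "W \<subseteq> V" for V
  using that by (auto simp: nbhd_def restr_def)

lemma nbhd_sub: "nbhd V E u \<subseteq> V" by (auto simp: nbhd_def)

lemma first_unique:
  "xs @ x # r = ys @ y # q \<Longrightarrow> P x \<Longrightarrow> P y \<Longrightarrow> (\<forall>z\<in>set xs. \<not> P z) \<Longrightarrow> (\<forall>z\<in>set ys. \<not> P z) \<Longrightarrow> x = y"
proof (induction xs arbitrary: ys)
  case Nil then show ?case by (cases ys) auto
next
  case (Cons a xs) then show ?case by (cases ys) auto
qed

lemma ons_lift:
  assumes WV: "W \<subseteq> V" and o': "open_nbhd_seq W (restr W E) xs"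
    and op: "open_nbhd_seq V E pre" and d: "set pre \<inter> W = {}"
    and pn: "\<forall>u\<in>set pre. nbhd V E u \<inter> W = {}"
  shows "open_nbhd_seq V E (pre @ xs)"
  using o'
proof (induction xs rule: rev_induct)
  case Nil then show ?case using op by simp
next
  case (snoc x xs)
  from snoc.prems have o1: "open_nbhd_seq W (restr W E) xs" and x: "x \<notin> set xs" "x \<in> W"
    and n: "nbhd W (restr W E) x - CovU W (restr W E) xs \<noteq> {}"
    using ons_snoc[of W "restr W E" xs x] by auto
  have xsW: "set xs \<subseteq> W" using ons_set[OF o1] .
  from n obtain w where w: "w \<in> nbhd W (restr W E) x" "w \<notin> CovU W (restr W E) xs" by blast
  have wN: "w \<in> nbhd V E x" "w \<in> W" using w(1) nbhd_restr[OF WV, of E x] x by auto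
  have "w \<notin> CovU V E pre" using pn wN(2) by (auto simp: CovU_def)
  moreover have "w \<notin> CovU V E xs"
  proof
    assume "w \<in> CovU V E xs"
    then obtain y where "y \<in> set xs" "w \<in> nbhd V E y" by (auto simp: CovU_def)
    then have "w \<in> nbhd W (restr W E) y" using xsW wN nbhd_restr[OF WV, of E y] by auto
    then show False using w(2) \<open>y \<in> set xs\<close> by (auto simp: CovU_def)
  qed
  ultimately have "nbhd V E x - CovU V E (pre @ xs) \<noteq> {}" using wN by auto
  moreover have "x \<notin> set (pre @ xs)" using x d by auto
  ultimately show ?case using snoc.IH[OF o1] x WV ons_snoc[of V E "pre @ xs" x] by auto
qed

lemma twins_not_both:
  assumes o: "open_nbhd_seq V E xs" and ab: "a \<in> set xs" "b \<in> set xs" "a \<noteq> b"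
    and n: "nbhd V E a = nbhd V E b"
  shows False
proof -
  obtain ys r where sp: "xs = ys @ a # r" using ab(1) split_list by metis
  show False
  proof (cases "b \<in> set ys")
    case True
    have "nbhd V E a - CovU V E ys \<noteq> {}" using ons_split o sp by metis
    then show False using True n by (auto simp: CovU_def)
  next
    case False
    then have "b \<in> set r" using ab sp by auto
    then obtain r1 r2 where "r = r1 @ b # r2" using split_list by metis
    then have "xs = (ys @ a # r1) @ b # r2" using sp by simp
    then have "nbhd V E b - CovU V E (ys @ a # r1) \<noteq> {}" using ons_split o by metis
    then show False using n by auto
  qed
qed

lemma gamma_drop:
  assumes sg: "simple_graph V E" and l: "l \<in> V" "nbhd V E l = {s}"
  shows "grundy_total_dom_num V E \<le> grundy_total_dom_num (V - {l, s}) (restr (V - {l, s}) E) + 2"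
proof -
  define W where "W = V - {l, s}"
  have fin: "finite V" using sg by (simp add: simple_graph_def)
  have sym: "\<And>u v. E u v \<Longrightarrow> E v u" using sg by (simp add: simple_graph_def)
  have WV: "W \<subseteq> V" by (auto simp: W_def)
  obtain xs where o: "open_nbhd_seq V E xs" and len: "length xs = grundy_total_dom_num V E"
    using gamma_ex[OF fin] by blast
  define fc where "fc x \<longleftrightarrow> (\<exists>as r. xs = as @ x # r \<and> s \<in> nbhd V E x \<and> s \<notin> CovU V E as)" for x
  have uniq: "fc x \<Longrightarrow> fc y \<Longrightarrow> x = y" for x y
  proof -
    assume "fc x" "fc y"
    then obtain as r bs q where "xs = as @ x # r" "s \<in> nbhd V E x" "s \<notin> CovU V E as"
      "xs = bs @ y # q" "s \<in> nbhd V E y" "s \<notin> CovU V E bs" unfolding fc_def by blast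
    then show "x = y"
      using first_unique[of as x r bs y q "\<lambda>z. s \<in> nbhd V E z"] by (auto simp: CovU_def)
  qed
  have fcl: "l \<in> set xs \<Longrightarrow> fc l"
  proof -
    assume "l \<in> set xs"
    then obtain as r where sp: "xs = as @ l # r" using split_list by metis
    then have "nbhd V E l - CovU V E as \<noteq> {}" using ons_split o by metis
    then show "fc l" unfolding fc_def using sp l by auto
  qed
  obtain c where c1: "\<forall>x. fc x \<longrightarrow> x = c" and c2: "l \<in> set xs \<longrightarrow> c = l"
  proof (cases "l \<in> set xs")
    case True then show ?thesis using that[of l] uniq fcl by blast
  next
    case False
    show ?thesis
    proof (cases "\<exists>x. fc x")
      case True then obtain x where "fc x" by blast
      then show ?thesis using that[of x] uniq False by blast
    next
      case False then show ?thesis using that[of l] by blast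
    qed
  qed
  define P where "P x \<longleftrightarrow> x \<notin> {s, c, l}" for x
  have step: "n \<le> length xs \<Longrightarrow> open_nbhd_seq W (restr W E) (filter P (take n xs))" for n
  proof (induction n)
    case 0 then show ?case by simp
  next
    case (Suc n)
    then have n: "n < length xs" by simp
    have tk: "take (Suc n) xs = take n xs @ [xs ! n]" using n by (simp add: take_Suc_conv_app_nth)
    have sp: "xs = take n xs @ xs ! n # drop (Suc n) xs" using n by (simp add: id_take_nth_drop)
    have ih: "open_nbhd_seq W (restr W E) (filter P (take n xs))" using Suc n by simp
    show ?case
    proof (cases "P (xs ! n)")
      case False then show ?thesis using ih tk by simp
    next
      case True
      let ?x = "xs ! n"
      have xV: "?x \<in> V" using ons_set[OF o] n by auto
      have xW: "?x \<in> W" using True xV by (auto simp: P_def W_def)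
      have "distinct (take n xs @ xs ! n # drop (Suc n) xs)" using ons_distinct[OF o] sp by metis
      then have dx: "?x \<notin> set (take n xs)" by simp
      have "nbhd V E ?x - CovU V E (take n xs) \<noteq> {}" using ons_split[of V E "take n xs" ?x] o sp by metis
      then obtain w where w: "w \<in> nbhd V E ?x" "w \<notin> CovU V E (take n xs)" by blast
      have wl: "w \<noteq> l"
      proof
        assume "w = l"
        then have "E l ?x" using w(1) sym by (auto simp: nbhd_def)
        then have "?x \<in> nbhd V E l" using xV by (auto simp: nbhd_def)
        then show False using l True by (auto simp: P_def)
      qed
      have ws: "w \<noteq> s"
      proof
        assume "w = s"
        then have "fc ?x" unfolding fc_def using sp w by blast
        then show False using c1 True by (auto simp: P_def)
      qed
      have wW: "w \<in> W" using wl ws w(1) nbhd_sub[of V E ?x] by (auto simp: W_def)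
      have "w \<in> nbhd W (restr W E) ?x" using w(1) wW xW nbhd_restr[OF WV, of E ?x] by auto
      moreover have "w \<notin> CovU W (restr W E) (filter P (take n xs))"
      proof
        assume "w \<in> CovU W (restr W E) (filter P (take n xs))"
        then obtain y where "y \<in> set (take n xs)" "w \<in> nbhd W (restr W E) y"
          by (auto simp: CovU_def)
        then show False using w(2) nbhd_restr[OF WV, of E y] by (auto simp: CovU_def split: if_splits)
      qed
      ultimately have "nbhd W (restr W E) ?x - CovU W (restr W E) (filter P (take n xs)) \<noteq> {}" by blast
      moreover have "?x \<notin> set (filter P (take n xs))" using dx by auto
      ultimately show ?thesis using ih tk True xW ons_snoc[of W "restr W E" "filter P (take n xs)" ?x]
        by simp
    qed
  qed
  have of: "open_nbhd_seq W (restr W E) (filter P xs)" using step[of "length xs"] by simp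
  have finW: "finite W" using fin by (simp add: W_def)
  have g1: "length (filter P xs) \<le> grundy_total_dom_num W (restr W E)" by (rule gamma_ge[OF finW of])
  have a1: "set (filter (\<lambda>x. \<not> P x) xs) \<subseteq> {s, c}" using c2 by (auto simp: P_def)
  have a2: "distinct (filter (\<lambda>x. \<not> P x) xs)" using ons_distinct[OF o] by simp
  have "length (filter (\<lambda>x. \<not> P x) xs) \<le> 2"
  proof -
    have a: "set (filter (\<lambda>x. \<not> P x) xs) \<subseteq> {s, c}" "distinct (filter (\<lambda>x. \<not> P x) xs)" using a1 a2 by auto
    have "length (filter (\<lambda>x. \<not> P x) xs) = card (set (filter (\<lambda>x. \<not> P x) xs))"
      using distinct_card[OF a(2)] by linarith
    also have "\<dots> \<le> card {s, c}" using a(1) by (intro card_mono) auto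
    also have "\<dots> \<le> 2" by (simp add: card_insert_if)
    finally show ?thesis .
  qed
  moreover have "length (filter P xs) + length (filter (\<lambda>x. \<not> P x) xs) = length xs"
    by (rule sum_length_filter_compl)
  ultimately show ?thesis using g1 len by (simp add: W_def)
qed


lemma special_support:
  assumes fo: "forest V E" and ni: "no_isolated V E" and ne: "V \<noteq> {}"
  shows "\<exists>s l. s \<in> V \<and> l \<in> nbhd V E s \<and> is_leaf V E l \<and>
     (\<forall>x\<in>nbhd V E s. \<forall>y\<in>nbhd V E s. \<not> is_leaf V E x \<longrightarrow> \<not> is_leaf V E y \<longrightarrow> x = y)"
proof -
  have sg: "simple_graph V E" using fo by (simp add: forest_def)
  have sym: "\<And>u v. E u v \<Longrightarrow> E v u" and inV: "\<And>u v. E u v \<Longrightarrow> u \<in> V \<and> v \<in> V"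
    using sg by (auto simp: simple_graph_def)
  define W where "W = V - {v. is_leaf V E v}"
  show ?thesis
  proof (cases "W = {}")
    case True
    obtain v where v: "v \<in> V" using ne by blast
    then have "is_leaf V E v" using True by (auto simp: W_def)
    then obtain t where t: "nbhd V E v = {t}" by (auto simp: is_leaf_def)
    then have "E v t" by (auto simp: nbhd_def)
    then have tV: "t \<in> V" and vt: "v \<in> nbhd V E t" using inV sym v by (auto simp: nbhd_def)
    have "\<forall>x\<in>nbhd V E t. is_leaf V E x" using True nbhd_sub[of V E t] by (auto simp: W_def)
    then show ?thesis using tV vt \<open>is_leaf V E v\<close> by blast
  next
    case False
    obtain s where s: "s \<in> W" and sd: "\<forall>x\<in>W. \<forall>y\<in>W. E s x \<longrightarrow> E s y \<longrightarrow> x = y"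
      using forest_low_deg[OF fo _ False] by (auto simp: W_def)
    have sV: "s \<in> V" and snl: "\<not> is_leaf V E s" using s by (auto simp: W_def)
    have "\<not> nbhd V E s \<subseteq> W"
    proof
      assume sub: "nbhd V E s \<subseteq> W"
      obtain t where t: "t \<in> nbhd V E s" using ni sV by (auto simp: no_isolated_def)
      have "nbhd V E s = {t}" using t sub sd by (auto simp: nbhd_def)
      then show False using snl sV by (auto simp: is_leaf_def)
    qed
    then obtain l where l: "l \<in> nbhd V E s" "l \<notin> W" by blast
    then have ll: "is_leaf V E l" using nbhd_sub[of V E s] by (auto simp: W_def)
    have "\<forall>x\<in>nbhd V E s. \<forall>y\<in>nbhd V E s. \<not> is_leaf V E x \<longrightarrow> \<not> is_leaf V E y \<longrightarrow> x = y"
      using sd by (auto simp: W_def nbhd_def)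
    then show ?thesis using sV l ll by blast
  qed
qed

lemma leaf_of_nb: "simple_graph V E \<Longrightarrow> is_leaf V E x \<Longrightarrow> x \<in> nbhd V E s \<Longrightarrow> nbhd V E x = {s}"
proof -
  assume sg: "simple_graph V E" and l: "is_leaf V E x" and xs: "x \<in> nbhd V E s"
  obtain t where t: "nbhd V E x = {t}" using l by (auto simp: is_leaf_def)
  have "E s x" "s \<in> V" using xs sg by (auto simp: nbhd_def simple_graph_def)
  then have "E x s" using sg by (auto simp: simple_graph_def)
  then have "s \<in> nbhd V E x" using \<open>s \<in> V\<close> by (simp add: nbhd_def)
  then show ?thesis using t by auto
qed

lemma miss_leaf_ind:
  "card V = m \<Longrightarrow> forest V E \<Longrightarrow> no_isolated V E \<Longrightarrow> grundy_total_dom_num V E < card V \<Longrightarrow>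
   \<exists>xs. open_nbhd_seq V E xs \<and> length xs = grundy_total_dom_num V E \<and> (\<exists>l. is_leaf V E l \<and> l \<notin> set xs)"
proof (induction m arbitrary: V E rule: less_induct)
  case (less m V E)
  have fo: "forest V E" and ni: "no_isolated V E" using less.prems by auto
  have sg: "simple_graph V E" using fo by (simp add: forest_def)
  have fin: "finite V" and sym: "\<And>u v. E u v \<Longrightarrow> E v u" and irr: "\<And>v. \<not> E v v"
    and inV: "\<And>u v. E u v \<Longrightarrow> u \<in> V \<and> v \<in> V"
    using sg by (auto simp: simple_graph_def)
  have ne: "V \<noteq> {}" using less.prems(4) by auto
  obtain s l where sV: "s \<in> V" and ls: "l \<in> nbhd V E s" and ll: "is_leaf V E l"
    and one: "\<forall>x\<in>nbhd V E s. \<forall>y\<in>nbhd V E s. \<not> is_leaf V E x \<longrightarrow> \<not> is_leaf V E y \<longrightarrow> x = y"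
    using special_support[OF fo ni ne] by blast
  have nl: "nbhd V E l = {s}" using leaf_of_nb[OF sg ll ls] .
  have lV: "l \<in> V" using ll by (simp add: is_leaf_def)
  have Els: "E l s" "E s l" using nl ls by (auto simp: nbhd_def)
  have lns: "l \<noteq> s" using Els irr by auto
  obtain xs0 where o0: "open_nbhd_seq V E xs0" and len0: "length xs0 = grundy_total_dom_num V E"
    using gamma_ex[OF fin] by blast
  show ?case
  proof (cases "\<exists>l2\<in>nbhd V E s. is_leaf V E l2 \<and> l2 \<noteq> l")
    case True
    then obtain l2 where l2: "l2 \<in> nbhd V E s" "is_leaf V E l2" "l2 \<noteq> l" by blast
    have "nbhd V E l2 = {s}" using leaf_of_nb[OF sg l2(2,1)] .
    then have "\<not> (l \<in> set xs0 \<and> l2 \<in> set xs0)" using twins_not_both[OF o0, of l l2] nl l2 by auto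
    then show ?thesis using o0 len0 ll l2 by blast
  next
    case False
    then have ol: "\<forall>y\<in>nbhd V E s. is_leaf V E y \<longrightarrow> y = l" by blast
    define W where "W = V - {l, s}"
    define E' where "E' = restr W E"
    have WV: "W \<subseteq> V" by (auto simp: W_def)
    have finW: "finite W" using fin by (simp add: W_def)
    have c2: "card {l, s} = 2" using lns by simp
    have cW: "card W = card V - card {l, s}" unfolding W_def
      by (rule card_Diff_subset) (use lV sV in auto)
    have "card {l, s} \<le> card V" using lV sV fin by (intro card_mono) auto
    then have cW2: "card V = card W + 2" using cW c2 by linarith
    have nbW: "\<And>u. nbhd W E' u = (if u \<in> W then nbhd V E u \<inter> W else {})"
      unfolding E'_def using nbhd_restr[OF WV] by blast
    have foW: "forest W E'"
      unfolding forest_def simple_graph_def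
    proof (intro conjI allI impI notI)
      show "finite W" by (rule finW)
      show "\<And>u v. E' u v \<Longrightarrow> E' v u" using sym by (auto simp: E'_def restr_def)
      show "\<And>v. E' v v \<Longrightarrow> False" using irr by (auto simp: E'_def restr_def)
      show "\<And>u v. E' u v \<Longrightarrow> u \<in> W" "\<And>u v. E' u v \<Longrightarrow> v \<in> W" by (auto simp: E'_def restr_def)
      show "\<exists>cs. is_cycle W E' cs \<Longrightarrow> False"
      proof -
        assume "\<exists>cs. is_cycle W E' cs"
        then obtain cs where "is_cycle W E' cs" by blast
        then have "is_cycle V E cs" using WV by (auto simp: is_cycle_def E'_def restr_def)
        then show False using fo by (auto simp: forest_def)
      qed
    qed
    have niW: "no_isolated W E'"
      unfolding no_isolated_def
    proof
      fix v assume vW: "v \<in> W"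
      then have vV: "v \<in> V" using WV by auto
      obtain u where u: "u \<in> nbhd V E v" using ni vV by (auto simp: no_isolated_def)
      show "nbhd W E' v \<noteq> {}"
      proof
        assume emp: "nbhd W E' v = {}"
        then have sub: "nbhd V E v \<subseteq> {l, s}" using nbW[of v] vW nbhd_sub[of V E v] by (auto simp: W_def)
        have "l \<notin> nbhd V E v"
        proof
          assume "l \<in> nbhd V E v"
          then have "v \<in> nbhd V E l" using sym vV by (auto simp: nbhd_def)
          then show False using nl vW by (auto simp: W_def)
        qed
        then have "nbhd V E v = {s}" using sub u by auto
        then have "is_leaf V E v" "v \<in> nbhd V E s" using vV sym sV by (auto simp: is_leaf_def nbhd_def)
        then show False using ol vW by (auto simp: W_def)
      qed
    qed
    have g2: "grundy_total_dom_num V E \<le> grundy_total_dom_num W E' + 2"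
      using gamma_drop[OF sg lV nl] by (simp add: W_def E'_def)
    have ol1: "open_nbhd_seq V E [l]" using ons_snoc[of V E "[]" l] lV nl by simp
    have lift1: "open_nbhd_seq V E ([l] @ ys)" if "open_nbhd_seq W E' ys" for ys
      using ons_lift[OF WV that[unfolded E'_def] ol1] nl by (auto simp: W_def)
    have lift0: "open_nbhd_seq V E ys" if "open_nbhd_seq W E' ys" for ys
      using ons_lift[OF WV that[unfolded E'_def], of "[]"] by simp
    have lnot: "l \<notin> CovU V E ys" if "set ys \<subseteq> W" for ys
    proof
      assume "l \<in> CovU V E ys"
      then obtain y where "y \<in> set ys" "E y l" by (auto simp: CovU_def nbhd_def)
      then have "y \<in> nbhd V E l" using sym inV by (auto simp: nbhd_def)
      then show False using nl that \<open>y \<in> set ys\<close> by (auto simp: W_def)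
    qed
    have ext1: "open_nbhd_seq V E ([l] @ ys @ [s])" if "open_nbhd_seq W E' ys" for ys
    proof -
      have yW: "set ys \<subseteq> W" using ons_set[OF that] .
      have "l \<in> nbhd V E s - CovU V E ([l] @ ys)" using ls lnot[OF yW] nl lns by auto
      moreover have "s \<notin> set ([l] @ ys)" using yW lns by (auto simp: W_def)
      ultimately show ?thesis using lift1[OF that] sV ons_snoc[of V E "[l] @ ys" s] by auto
    qed
    obtain ys0 where oy0: "open_nbhd_seq W E' ys0" and leny0: "length ys0 = grundy_total_dom_num W E'"
      using gamma_ex[OF finW] by blast
    have "length ([l] @ ys0 @ [s]) \<le> grundy_total_dom_num V E" using gamma_ge[OF fin ext1[OF oy0]] .
    then have geq: "grundy_total_dom_num V E = grundy_total_dom_num W E' + 2" using g2 leny0 by simp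
    have "grundy_total_dom_num W E' < card W" using geq cW2 less.prems(4) by simp
    moreover have "card W < m" using cW2 less.prems(1) by simp
    ultimately obtain ys l' where oy: "open_nbhd_seq W E' ys" and leny: "length ys = grundy_total_dom_num W E'"
      and l': "is_leaf W E' l'" "l' \<notin> set ys"
      using less.IH[OF _ refl foW niW] by blast
    have yW: "set ys \<subseteq> W" using ons_set[OF oy] .
    have l'W: "l' \<in> W" using l' by (simp add: is_leaf_def)
    show ?thesis
    proof (cases "E s l'")
      case True
      have l'nl: "\<not> is_leaf V E l'" using ol True l'W inV by (auto simp: nbhd_def W_def)
      have o1: "open_nbhd_seq V E (ys @ [s])"
      proof -
        have "l \<in> nbhd V E s - CovU V E ys" using ls lnot[OF yW] by auto
        moreover have "s \<notin> set ys" using yW by (auto simp: W_def)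
        ultimately show ?thesis using lift0[OF oy] sV ons_snoc[of V E ys s] by auto
      qed
      have "s \<notin> CovU V E (ys @ [s])"
      proof
        assume "s \<in> CovU V E (ys @ [s])"
        then obtain y where y: "y \<in> set ys" "E y s" using irr by (auto simp: CovU_def nbhd_def)
        then have yn: "y \<in> nbhd V E s" using sym inV by (auto simp: nbhd_def)
        have "y \<noteq> l" using y yW by (auto simp: W_def)
        then have "\<not> is_leaf V E y" using ol yn by auto
        moreover have "l' \<in> nbhd V E s" using True inV by (auto simp: nbhd_def)
        ultimately have "y = l'" using one yn l'nl by blast
        then show False using y l' by auto
      qed
      moreover have "s \<in> nbhd V E l'" using True sym inV by (auto simp: nbhd_def)
      moreover have "l' \<notin> set (ys @ [s])" using l' l'W by (auto simp: W_def)
      moreover have "l' \<in> V" using l'W WV by auto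
      ultimately have o2: "open_nbhd_seq V E ((ys @ [s]) @ [l'])"
        using o1 ons_snoc[of V E "ys @ [s]" l'] by blast
      have "length ((ys @ [s]) @ [l']) = grundy_total_dom_num V E" using geq leny by simp
      moreover have "l \<notin> set ((ys @ [s]) @ [l'])" using yW lns l'W by (auto simp: W_def)
      ultimately show ?thesis using o2 ll by blast
    next
      case False
      have "nbhd V E l' = nbhd W E' l'"
      proof -
        have "l \<notin> nbhd V E l'"
        proof
          assume "l \<in> nbhd V E l'"
          then have "l' \<in> nbhd V E l" using sym inV by (auto simp: nbhd_def)
          then show False using nl l'W by (auto simp: W_def)
        qed
        moreover have "s \<notin> nbhd V E l'" using False sym by (auto simp: nbhd_def)
        ultimately show ?thesis using nbW[of l'] l'W nbhd_sub[of V E l'] by (auto simp: W_def)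
      qed
      then have "is_leaf V E l'" using l' l'W WV by (auto simp: is_leaf_def)
      moreover have "l' \<notin> set ([l] @ ys @ [s])" using l' l'W by (auto simp: W_def)
      moreover have "length ([l] @ ys @ [s]) = grundy_total_dom_num V E" using geq leny by simp
      ultimately show ?thesis using ext1[OF oy] by blast
    qed
  qed
qed


lemma aut_nbhd:
  assumes a: "automorphism V E f" and v: "v \<in> V"
  shows "nbhd V E (f v) = f ` nbhd V E v"
proof
  have bij: "bij_betw f V V" and pr: "\<forall>u\<in>V. \<forall>w\<in>V. E (f u) (f w) \<longleftrightarrow> E u w"
    using a by (auto simp: automorphism_def)
  show "nbhd V E (f v) \<subseteq> f ` nbhd V E v"
  proof
    fix u assume "u \<in> nbhd V E (f v)"
    then have u: "u \<in> V" "E (f v) u" by (auto simp: nbhd_def)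
    then obtain w where w: "w \<in> V" "u = f w" using bij by (metis bij_betw_imp_surj_on imageE)
    then have "E v w" using pr u v by auto
    then show "u \<in> f ` nbhd V E v" using w by (auto simp: nbhd_def)
  qed
  show "f ` nbhd V E v \<subseteq> nbhd V E (f v)"
  proof
    fix u assume "u \<in> f ` nbhd V E v"
    then obtain w where w: "w \<in> V" "E v w" "u = f w" by (auto simp: nbhd_def)
    then have "E (f v) (f w)" using pr v by auto
    moreover have "f w \<in> V" using bij w by (metis bij_betwE)
    ultimately show "u \<in> nbhd V E (f v)" using w by (auto simp: nbhd_def)
  qed
qed

lemma aut_leaf:
  assumes a: "automorphism V E f" and l: "is_leaf V E v"
  shows "is_leaf V E (f v)"
proof -
  have v: "v \<in> V" and bij: "bij_betw f V V" using l a by (auto simp: is_leaf_def automorphism_def)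
  obtain s where "nbhd V E v = {s}" using l by (auto simp: is_leaf_def)
  then have "nbhd V E (f v) = {f s}" using aut_nbhd[OF a v] by simp
  moreover have "f v \<in> V" using bij v by (metis bij_betwE)
  ultimately show ?thesis by (auto simp: is_leaf_def)
qed

theorem theorem5p6:
  fixes V :: "'a set" and E :: "'a \<Rightarrow> 'a \<Rightarrow> bool"
  assumes "forest V E" and "no_isolated V E" and "no_open_twins V E"
  shows "iso_unique_grundy_total V E \<longleftrightarrow> grundy_total_dom_num V E = card V"
proof
  have sg: "simple_graph V E" using assms(1) by (simp add: forest_def)
  have fin: "finite V" using sg by (simp add: simple_graph_def)
  assume iso: "iso_unique_grundy_total V E"
  show "grundy_total_dom_num V E = card V"
  proof (rule ccontr)
    assume "grundy_total_dom_num V E \<noteq> card V"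
    then have lt: "grundy_total_dom_num V E < card V" using gamma_le[OF fin, of E] by simp
    obtain xs l0 where oB: "open_nbhd_seq V E xs" "length xs = grundy_total_dom_num V E"
      and l0: "is_leaf V E l0" "l0 \<notin> set xs"
      using miss_leaf_ind[OF refl assms(1,2) lt] by blast
    obtain ys where oA: "open_nbhd_seq V E ys" "length ys = grundy_total_dom_num V E"
      and allL: "{v. is_leaf V E v} \<subseteq> set ys"
      using all_leaves[OF sg assms(3)] by blast
    have "grundy_total_dom_set V E (set ys)" "grundy_total_dom_set V E (set xs)"
      using oA oB by (auto simp: grundy_total_dom_set_def)
    then have "\<exists>f. automorphism V E f \<and> f ` set ys = set xs"
      using iso unfolding iso_unique_grundy_total_def by blast
    then obtain f where f: "automorphism V E f" "f ` set ys = set xs" by blast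
    define L where "L = {v. is_leaf V E v}"
    have LV: "L \<subseteq> V" by (auto simp: L_def is_leaf_def)
    have finL: "finite L" using finite_subset[OF LV fin] .
    have inj: "inj_on f L" using f(1) LV by (auto simp: automorphism_def bij_betw_def intro: inj_on_subset)
    have sub: "f ` L \<subseteq> L" using aut_leaf[OF f(1)] by (auto simp: L_def)
    have "f ` L = L" using card_subset_eq[OF finL sub] card_image[OF inj] by simp
    then have "l0 \<in> f ` set ys" using l0(1) allL by (auto simp: L_def)
    then show False using f(2) l0(2) by simp
  qed
next
  have sg: "simple_graph V E" using assms(1) by (simp add: forest_def)
  have fin: "finite V" using sg by (simp add: simple_graph_def)
  assume eq: "grundy_total_dom_num V E = card V"
  have allV: "A = V" if gA: "grundy_total_dom_set V E A" for A
  proof -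
    obtain xs where xs: "open_nbhd_seq V E xs" "length xs = card V" "set xs = A"
      using gA eq by (auto simp: grundy_total_dom_set_def)
    have "card A = card V" using xs distinct_card[OF ons_distinct[OF xs(1)]] by simp
    then show "A = V" using card_subset_eq[OF fin] ons_set[OF xs(1)] xs(3) by blast
  qed
  show "iso_unique_grundy_total V E"
    unfolding iso_unique_grundy_total_def
  proof (intro allI impI)
    fix A B assume "grundy_total_dom_set V E A \<and> grundy_total_dom_set V E B"
    then have "A = V" "B = V" using allV by auto
    moreover have "automorphism V E id" by (simp add: automorphism_def bij_betw_id)
    ultimately show "\<exists>\<phi>. automorphism V E \<phi> \<and> \<phi> ` A = B" by (intro exI[of _ id]) simp
  qed
qed

end
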